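(* Let $H=\Bbbk^G\#\Bbbk F$ be as in the context with $G$ abelian. Fix $f\in F$ and let $V=\Bbbk v$ be a simple (one-dimensional) right $\Bbbk^{G_f}$-comodule with $\rho(v)=v\otimes\sum_{g\in G_f}a^gp_g$, $a^g\in\Bbbk$. Let $\tilde V=(V\otimes\Bbbk f)\Box_{H'_f}H$ be the induced right $H$-comodule. Then $\mathrm{cf}(\tilde V)$ is the simple subcoalgebra of $H$ spanned by $B=\{\sum_{g\in G_f}a^gp_{(z')^{-1}gz}\#(z^{-1}\triangleright f)\mid z,z'\in T_f\}$, and $\chi(\tilde V)=\sum_{z\in T_f}\sum_{g\in G_f}a^gp_g\#(z^{-1}\triangleright f)$.
   Context: Setting: $\Bbbk$ algebraically closed of characteristic $0$, $F$ a group (possibly infinite), $G$ a finite abelian group, $(F,G,\triangleleft,\triangleright)$ a matched pair ($\triangleright:G\times F\to F$ a left action of $G$ on the set $F$, $\triangleleft:G\times F\to G$ a right action of $F$ on the set $G$, with $g\triangleright(ff')=(g\triangleright f)((g\triangleleft f)\triangleright f')$ and $(gg')\triangleleft f=(g\triangleleft(g'\triangleright f))(g'\triangleleft f)$). $H=\Bbbk^G\#\Bbbk F$ is the Hopf algebra with basis $\{p_g\#f\}_{g\in G,f\in F}$ ($\{p_g\}$ the dual basis of $\Bbbk^G$), product $(p_g\#f)(p_{g'}\#f')=\delta_{g\triangleleft f,g'}p_g\#ff'$, unit $\sum_gp_g\#1_F$, coproduct $\Delta(p_g\#f)=\sum_{x\in G}p_{gx^{-1}}\#(x\triangleright f)\otimes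 p_x\#f$, counit $\varepsilon(p_g\#f)=\delta_{g,1_G}$, antipode $S(p_g\#f)=p_{(g\triangleleft f)^{-1}}\#(g\triangleright f)^{-1}$. $G_f=\{g\in G\mid g\triangleright f=f\}$; $T_f$ a complete set of right coset representatives of $G_f$ in $G$ containing $1_G$. $\Bbbk^{G_f}$ is the usual dual group coalgebra. $H'_f$ is the coalgebra with basis $\{p_g\#f'\mid g\in G_f,f'\in F\}$, $\Delta(p_g\#f')=\sum_{x\in G_f}p_{gx^{-1}}\#(x\triangleright f')\otimes p_x\#f'$, $\varepsilon(p_g\#f')=\delta_{g,1_G}$; $H$ is a left $H'_f$-comodule via $(\pi_f\otimes\mathrm{id})\Delta$ ($\pi_f$ kills $p_g\#f'$, $g\notin G_f$). For a right $\Bbbk^{G_f}$-comodule $V$ with $\rho(v)=\sum_{g\in G_f}v_g\otimes p_g$, $V\otimes\Bbbk f$ is a right $H'_f$-comodule via $v\otimes f\mapsto\sum_gv_g\otimes f\otimes p_g\#f$, and $\tilde V=(V\otimes\Bbbk f)\Box_{H'_f}H$ (cotensor product) is a right $H$-comodule via $\mathrm{id}\otimes\Delta$. $\mathrm{cf}(M)$ is the smallest subcoalgebra $D$ with $\rho(M)\subseteq M\otimes D$; $\chi(M)=\sum_i(m_i^*\otimes\mathrm{id})\rho(m_i)$. *)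

theory Defs
  imports "HOL-Algebra.Algebra" "HOL-Computational_Algebra.Polynomial" "HOL-Library.Function_Algebras"
begin

definition sc :: "'k::field \<Rightarrow> ('i \<Rightarrow> 'k) \<Rightarrow> ('i \<Rightarrow> 'k)" where
  "sc c h = (\<lambda>x. c * h x)"

definition kspan :: "('i \<Rightarrow> 'k::field) set \<Rightarrow> ('i \<Rightarrow> 'k) set" where
  "kspan S = module.span sc S"

definition ksubspace :: "('i \<Rightarrow> 'k::field) set \<Rightarrow> bool" where
  "ksubspace S = module.subspace sc S"

definition kindep :: "('i \<Rightarrow> 'k::field) set \<Rightarrow> bool" where
  "kindep S = (\<not> module.dependent sc S)"

definition fin_basis :: "('i \<Rightarrow> 'k::field) set \<Rightarrow> ('i \<Rightarrow> 'k) set \<Rightarrow> bool" where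
  "fin_basis Bs W = (finite Bs \<and> Bs \<subseteq> W \<and> kindep Bs \<and> kspan Bs = W)"

definition pb :: "'i \<Rightarrow> 'i \<Rightarrow> 'k::field" where
  "pb i = (\<lambda>j. if j = i then 1 else 0)"

definition tp :: "('i \<Rightarrow> 'k::field) \<Rightarrow> ('j \<Rightarrow> 'k) \<Rightarrow> ('i \<times> 'j \<Rightarrow> 'k)" where
  "tp u w = (\<lambda>(a, b). u a * w b)"

definition tensor_sub :: "('i \<Rightarrow> 'k::field) set \<Rightarrow> ('j \<Rightarrow> 'k) set \<Rightarrow> ('i \<times> 'j \<Rightarrow> 'k) set" where
  "tensor_sub U D = kspan {tp u d | u d. u \<in> U \<and> d \<in> D}"

definition algebraically_closed :: "'k::field itself \<Rightarrow> bool" where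
  "algebraically_closed TYPE('k) =
     (\<forall>p :: 'k poly. degree p > 0 \<longrightarrow> (\<exists>x. poly p x = 0))"

text \<open>rhd g f = g |> f  (left action of G on the set F);
      lhd g f = g <| f  (right action of F on the set G).\<close>
definition matched_pair ::
  "('f, 'm) monoid_scheme \<Rightarrow> ('g, 'n) monoid_scheme \<Rightarrow>
   ('g \<Rightarrow> 'f \<Rightarrow> 'g) \<Rightarrow> ('g \<Rightarrow> 'f \<Rightarrow> 'f) \<Rightarrow> bool" where
  "matched_pair F G lhd rhd =
    ((\<forall>g\<in>carrier G. \<forall>f\<in>carrier F. rhd g f \<in> carrier F \<and> lhd g f \<in> carrier G)
   \<and> (\<forall>f\<in>carrier F. rhd \<one>\<^bsub>G\<^esub> f = f)
   \<and> (\<forall>g\<in>carrier G. \<forall>g'\<in>carrier G. \<forall>f\<in>carrier F.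
         rhd (g \<otimes>\<^bsub>G\<^esub> g') f = rhd g (rhd g' f))
   \<and> (\<forall>g\<in>carrier G. lhd g \<one>\<^bsub>F\<^esub> = g)
   \<and> (\<forall>g\<in>carrier G. \<forall>f\<in>carrier F. \<forall>f'\<in>carrier F.
         lhd g (f \<otimes>\<^bsub>F\<^esub> f') = lhd (lhd g f) f')
   \<and> (\<forall>g\<in>carrier G. \<forall>f\<in>carrier F. \<forall>f'\<in>carrier F.
         rhd g (f \<otimes>\<^bsub>F\<^esub> f') = rhd g f \<otimes>\<^bsub>F\<^esub> rhd (lhd g f) f')
   \<and> (\<forall>g\<in>carrier G. \<forall>g'\<in>carrier G. \<forall>f\<in>carrier F.
         lhd (g \<otimes>\<^bsub>G\<^esub> g') f = lhd g (rhd g' f) \<otimes>\<^bsub>G\<^esub> lhd g' f))"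

text \<open>Elements of H are written in the basis  p_g # f  (indexed by (g,f)):
  an element is a finitely supported coefficient function on  G x F.
  H (x) H has basis indexed by ((g1,f1),(g2,f2)).\<close>

definition Hspace :: "('f, 'm) monoid_scheme \<Rightarrow> ('g, 'n) monoid_scheme \<Rightarrow> ('g \<times> 'f \<Rightarrow> 'k::field) set" where
  "Hspace F G = {h. finite {p. h p \<noteq> 0} \<and>
                    (\<forall>p. h p \<noteq> 0 \<longrightarrow> fst p \<in> carrier G \<and> snd p \<in> carrier F)}"

definition pf :: "'g \<Rightarrow> 'f \<Rightarrow> ('g \<times> 'f \<Rightarrow> 'k::field)" where
  "pf g f = pb (g, f)"

definition Delta_basis ::
  "('g, 'n) monoid_scheme \<Rightarrow> ('g \<Rightarrow> 'f \<Rightarrow> 'f) \<Rightarrow> 'g \<Rightarrow> 'f \<Rightarrow> (('g \<times> 'f) \<times> ('g \<times> 'f) \<Rightarrow> 'k::field)" where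
  "Delta_basis G rhd g f =
     (\<Sum>x\<in>carrier G. tp (pf (g \<otimes>\<^bsub>G\<^esub> inv\<^bsub>G\<^esub> x) (rhd x f)) (pf x f))"

definition Delta ::
  "('g, 'n) monoid_scheme \<Rightarrow> ('g \<Rightarrow> 'f \<Rightarrow> 'f) \<Rightarrow> ('g \<times> 'f \<Rightarrow> 'k::field) \<Rightarrow> (('g \<times> 'f) \<times> ('g \<times> 'f) \<Rightarrow> 'k)" where
  "Delta G rhd h = (\<Sum>p\<in>{p. h p \<noteq> 0}. sc (h p) (Delta_basis G rhd (fst p) (snd p)))"

definition subcoalgebra ::
  "('f, 'm) monoid_scheme \<Rightarrow> ('g, 'n) monoid_scheme \<Rightarrow> ('g \<Rightarrow> 'f \<Rightarrow> 'f) \<Rightarrow>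
   ('g \<times> 'f \<Rightarrow> 'k::field) set \<Rightarrow> bool" where
  "subcoalgebra F G rhd D =
     (D \<subseteq> Hspace F G \<and> ksubspace D \<and> Delta G rhd ` D \<subseteq> tensor_sub D D)"

definition simple_subcoalgebra ::
  "('f, 'm) monoid_scheme \<Rightarrow> ('g, 'n) monoid_scheme \<Rightarrow> ('g \<Rightarrow> 'f \<Rightarrow> 'f) \<Rightarrow>
   ('g \<times> 'f \<Rightarrow> 'k::field) set \<Rightarrow> bool" where
  "simple_subcoalgebra F G rhd D =
     (subcoalgebra F G rhd D \<and> D \<noteq> {0} \<and>
      (\<forall>D'. subcoalgebra F G rhd D' \<and> D' \<subseteq> D \<longrightarrow> D' = {0} \<or> D' = D))"

text \<open>Coefficient coalgebra: for a right H-comodule M realised as a subspace of H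
  with coaction Delta (a right coideal), cf(M) is the smallest subcoalgebra D with
  Delta(M) \<subseteq> M (x) D.  "is_cf M D" says D is this smallest subcoalgebra.\<close>
definition is_cf ::
  "('f, 'm) monoid_scheme \<Rightarrow> ('g, 'n) monoid_scheme \<Rightarrow> ('g \<Rightarrow> 'f \<Rightarrow> 'f) \<Rightarrow>
   ('g \<times> 'f \<Rightarrow> 'k::field) set \<Rightarrow> ('g \<times> 'f \<Rightarrow> 'k) set \<Rightarrow> bool" where
  "is_cf F G rhd M D =
     (subcoalgebra F G rhd D \<and> Delta G rhd ` M \<subseteq> tensor_sub M D \<and>
      (\<forall>D'. subcoalgebra F G rhd D' \<and> Delta G rhd ` M \<subseteq> tensor_sub M D' \<longrightarrow> D \<subseteq> D'))"

text \<open>Character chi(M) = sum_i (m_i^* (x) id) rho(m_i) for a basis m_i with dual basis m_i^*: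
  writing rho(m_b) = sum_{b'} m_{b'} (x) c_{b' b}, one has (m_b^* (x) id) rho(m_b) = c_{b b}.\<close>
definition character ::
  "('g, 'n) monoid_scheme \<Rightarrow> ('g \<Rightarrow> 'f \<Rightarrow> 'f) \<Rightarrow>
   ('g \<times> 'f \<Rightarrow> 'k::field) set \<Rightarrow> ('g \<times> 'f \<Rightarrow> 'k)" where
  "character G rhd M =
     (SOME x. \<exists>Bs c. fin_basis Bs M \<and>
        (\<forall>b\<in>Bs. Delta G rhd b = (\<Sum>b'\<in>Bs. tp b' (c b' b))) \<and>
        x = (\<Sum>b\<in>Bs. c b b))"

definition stab :: "('g, 'n) monoid_scheme \<Rightarrow> ('g \<Rightarrow> 'f \<Rightarrow> 'f) \<Rightarrow> 'f \<Rightarrow> 'g set" where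
  "stab G rhd f = {g \<in> carrier G. rhd g f = f}"

text \<open>Elements of k^{G_f}: coefficient functions on G supported on G_f (basis p_g, g in G_f).
  Comultiplication Delta(p_g) = sum_{x in G_f} p_{g x^-1} (x) p_x, counit eps(p_g) = delta_{g,1}.\<close>
definition dual_delta :: "('g, 'n) monoid_scheme \<Rightarrow> 'g set \<Rightarrow> ('g \<Rightarrow> 'k::field) \<Rightarrow> ('g \<times> 'g \<Rightarrow> 'k)" where
  "dual_delta G K c =
     (\<Sum>g\<in>K. sc (c g) (\<Sum>x\<in>K. tp (pb (g \<otimes>\<^bsub>G\<^esub> inv\<^bsub>G\<^esub> x)) (pb x)))"

definition dual_eps :: "('g, 'n) monoid_scheme \<Rightarrow> 'g set \<Rightarrow> ('g \<Rightarrow> 'k::field) \<Rightarrow> 'k" where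
  "dual_eps G K c = (\<Sum>g\<in>K. c g * (if g = \<one>\<^bsub>G\<^esub> then 1 else 0))"

text \<open>V = k v with rho(v) = v (x) c, c = sum_{g in G_f} a^g p_g, is a right k^{G_f}-comodule
  iff coassociativity  v (x) c (x) c = v (x) Delta(c)  and counitality  eps(c) v = v hold.\<close>
definition onedim_comodule :: "('g, 'n) monoid_scheme \<Rightarrow> 'g set \<Rightarrow> ('g \<Rightarrow> 'k::field) \<Rightarrow> bool" where
  "onedim_comodule G K a =
     (let c = (\<lambda>g. if g \<in> K then a g else 0)
      in dual_delta G K c = tp c c \<and> dual_eps G K c = 1)"

text \<open>Left H'_f-coaction on H: (pi_f (x) id) Delta, pi_f killing p_g # f' for g not in G_f.\<close>
definition left_coact ::
  "('g, 'n) monoid_scheme \<Rightarrow> ('g \<Rightarrow> 'f \<Rightarrow> 'f) \<Rightarrow> 'f \<Rightarrow> ('g \<times> 'f \<Rightarrow> 'k::field) \<Rightarrow> (('g \<times> 'f) \<times> ('g \<times> 'f) \<Rightarrow> 'k)" where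
  "left_coact G rhd f h =
     (\<lambda>(p, q). if fst p \<in> stab G rhd f then Delta G rhd h (p, q) else 0)"

text \<open>Since V (x) kf = k (v (x) f) is one-dimensional,
  (V (x) kf) (x) H is identified with H via (v (x) f) (x) h |-> h.  The right H'_f-coaction on
  V (x) kf is v (x) f |-> sum_{g in G_f} a^g (v (x) f) (x) (p_g # f), so the cotensor condition
  becomes  (sum_g a^g p_g # f) (x) h = (pi_f (x) id) Delta(h), and the right H-coaction id (x) Delta
  becomes Delta restricted to this subspace.\<close>
definition induced_comodule ::
  "('f, 'm) monoid_scheme \<Rightarrow> ('g, 'n) monoid_scheme \<Rightarrow> ('g \<Rightarrow> 'f \<Rightarrow> 'f) \<Rightarrow> 'f \<Rightarrow> ('g \<Rightarrow> 'k::field) \<Rightarrow>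
   ('g \<times> 'f \<Rightarrow> 'k) set" where
  "induced_comodule F G rhd f a =
     {h \<in> Hspace F G.
        tp (\<Sum>g\<in>stab G rhd f. sc (a g) (pf g f)) h = left_coact G rhd f h}"

end

theory Submission
  imports Defs
begin

interpretation ksc: Modules.module "sc :: 'k::field \<Rightarrow> ('i \<Rightarrow> 'k) \<Rightarrow> ('i \<Rightarrow> 'k)"
  by unfold_locales (auto simp: sc_def fun_eq_iff algebra_simps)

lemma kspan_eq: "kspan S = ksc.span S" by (simp add: kspan_def)
lemma ksubspace_eq: "ksubspace S = ksc.subspace S" by (simp add: ksubspace_def)

lemma sum_fun_apply: "(\<Sum>i\<in>A. h i) x = (\<Sum>i\<in>A. h i x)"
  by (induction A rule: infinite_finite_induct) auto

lemma sc_apply[simp]: "sc c h x = c * h x" by (simp add: sc_def)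
lemma tp_apply[simp]: "tp u w (p,q) = u p * w q" by (simp add: tp_def)
lemma pf_apply: "pf g f' p = (if p = (g,f') then 1 else 0)" by (simp add: pf_def pb_def)

definition Dl :: "('g, 'n) monoid_scheme \<Rightarrow> ('g \<Rightarrow> 'f \<Rightarrow> 'f) \<Rightarrow> ('g \<times> 'f \<Rightarrow> 'k::field) \<Rightarrow> (('g \<times> 'f) \<times> ('g \<times> 'f) \<Rightarrow> 'k)" where
  "Dl G rhd h = (\<lambda>(p,q). if fst p \<in> carrier G \<and> fst q \<in> carrier G \<and> snd p = rhd (fst q) (snd q)
       then h (fst p \<otimes>\<^bsub>G\<^esub> fst q, snd q) else 0)"

lemma Dl_apply: "Dl G rhd h ((x1,f1),(x2,f2)) = (if x1 \<in> carrier G \<and> x2 \<in> carrier G \<and> f1 = rhd x2 f2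
       then h (x1 \<otimes>\<^bsub>G\<^esub> x2, f2) else 0)"
  by (simp add: Dl_def)

lemma Delta_basis_apply:
  assumes "group G" "finite (carrier G)" "g \<in> carrier G"
  shows "Delta_basis G rhd g f' ((x1,f1),(x2,f2)) =
     (if x2 \<in> carrier G \<and> f' = f2 \<and> g = x1 \<otimes>\<^bsub>G\<^esub> x2 \<and> x1 \<in> carrier G \<and> f1 = rhd x2 f2 then 1 else 0)"
proof -
  interpret group G by fact
  have "Delta_basis G rhd g f' ((x1,f1),(x2,f2)) =
     (\<Sum>x\<in>carrier G. if x = x2 then (if f' = f2 \<and> x1 = g \<otimes>\<^bsub>G\<^esub> inv\<^bsub>G\<^esub> x2 \<and> f1 = rhd x2 f2 then 1 else 0) else 0)"
    unfolding Delta_basis_def sum_fun_apply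
    by (rule sum.cong) (auto simp: pf_apply)
  also have "\<dots> = (if x2 \<in> carrier G \<and> f' = f2 \<and> x1 = g \<otimes>\<^bsub>G\<^esub> inv\<^bsub>G\<^esub> x2 \<and> f1 = rhd x2 f2 then 1 else 0)"
    using assms(2) by (simp add: sum.delta)
  also have "\<dots> = (if x2 \<in> carrier G \<and> f' = f2 \<and> g = x1 \<otimes>\<^bsub>G\<^esub> x2 \<and> x1 \<in> carrier G \<and> f1 = rhd x2 f2 then 1 else 0)"
    using assms(3) by (auto simp: m_assoc)
  finally show ?thesis .
qed

lemma Delta_eq:
  assumes "group G" "finite (carrier G)" "h \<in> Hspace F G"
  shows "Delta G rhd h = Dl G rhd h"
proof (rule ext, clarify)
  interpret group G by fact
  fix x1 f1 x2 f2
  let ?S = "{p. h p \<noteq> 0}"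
  have fin: "finite ?S" and car: "\<And>p. p \<in> ?S \<Longrightarrow> fst p \<in> carrier G"
    using assms(3) by (auto simp: Hspace_def)
  have "Delta G rhd h ((x1,f1),(x2,f2)) = (\<Sum>p\<in>?S. h p * Delta_basis G rhd (fst p) (snd p) ((x1,f1),(x2,f2)))"
    unfolding Delta_def sum_fun_apply by simp
  also have "\<dots> = (\<Sum>p\<in>?S. if p = (x1 \<otimes>\<^bsub>G\<^esub> x2, f2) then
         (if x1 \<in> carrier G \<and> x2 \<in> carrier G \<and> f1 = rhd x2 f2 then h p else 0) else 0)"
    by (rule sum.cong) (use car in \<open>auto simp: Delta_basis_apply[OF assms(1,2)]\<close>)
  also have "\<dots> = Dl G rhd h ((x1,f1),(x2,f2))"
    using fin by (auto simp: sum.delta Dl_apply)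
  finally show "Delta G rhd h ((x1,f1),(x2,f2)) = Dl G rhd h ((x1,f1),(x2,f2))" .
qed

lemma Dl_sum: "Dl G rhd (\<Sum>i\<in>I. h i) = (\<Sum>i\<in>I. Dl G rhd (h i))"
  by (rule ext) (auto simp: Dl_def sum_fun_apply)
lemma Dl_sc: "Dl G rhd (sc c h) = sc c (Dl G rhd h)"
  by (rule ext) (auto simp: Dl_def)
lemma Dl_add: "Dl G rhd (h + h') = Dl G rhd h + Dl G rhd h'"
  by (rule ext) (auto simp: Dl_def)
lemma Dl_zero: "Dl G rhd 0 = 0"
  by (rule ext) (auto simp: Dl_def)

lemma Hspace_subspace: "ksubspace (Hspace F G :: ('g \<times> 'f \<Rightarrow> 'k::field) set)"
  unfolding ksubspace_eq ksc.subspace_def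
proof (intro conjI ballI allI)
  show "0 \<in> Hspace F G" by (simp add: Hspace_def)
next
  fix x y :: "'g \<times> 'f \<Rightarrow> 'k" assume "x \<in> Hspace F G" "y \<in> Hspace F G"
  then show "x + y \<in> Hspace F G"
    unfolding Hspace_def
    by (auto intro: finite_subset[of _ "{p. x p \<noteq> 0} \<union> {p. y p \<noteq> 0}"]) (metis add.right_neutral)+
next
  fix c and x :: "'g \<times> 'f \<Rightarrow> 'k" assume "x \<in> Hspace F G"
  then show "sc c x \<in> Hspace F G"
    unfolding Hspace_def
    by (auto intro: finite_subset[of _ "{p. x p \<noteq> 0}"])
qed

lemma Hspace_add: "(x :: 'g \<times> 'f \<Rightarrow> 'k::field) \<in> Hspace F G \<Longrightarrow> y \<in> Hspace F G \<Longrightarrow> x + y \<in> Hspace F G"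
  using Hspace_subspace[of F G] unfolding ksubspace_eq ksc.subspace_def by blast
lemma Hspace_sc: "(x :: 'g \<times> 'f \<Rightarrow> 'k::field) \<in> Hspace F G \<Longrightarrow> sc c x \<in> Hspace F G"
  using Hspace_subspace[of F G] unfolding ksubspace_eq ksc.subspace_def by blast

lemma tensor_eval1:
  fixes Y :: "'a \<times> 'b \<Rightarrow> 'k::field"
  assumes "Y \<in> tensor_sub A D" "ksubspace D"
  shows "(\<lambda>q. Y (p,q)) \<in> D"
proof -
  have "Y \<in> {Y. (\<lambda>q. Y (p,q)) \<in> D}"
    using assms(1) unfolding tensor_sub_def kspan_eq
  proof (rule ksc.span_subspace_induct)
    show "ksc.subspace {Y. (\<lambda>q. Y (p, q)) \<in> D}"
    proof -
      have z: "(\<lambda>q. (0::'a \<times> 'b \<Rightarrow> 'k) (p, q)) = 0" by (simp add: fun_eq_iff)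
      have a: "\<And>x y::'a \<times> 'b \<Rightarrow> 'k. (\<lambda>q. (x + y) (p, q)) = (\<lambda>q. x (p, q)) + (\<lambda>q. y (p, q))" by (simp add: fun_eq_iff)
      have s: "\<And>c (x::'a \<times> 'b \<Rightarrow> 'k). (\<lambda>q. sc c x (p, q)) = sc c (\<lambda>q. x (p, q))" by (simp add: fun_eq_iff)
      show ?thesis
        using assms(2) unfolding ksubspace_eq ksc.subspace_def mem_Collect_eq z a s by auto
    qed
  next
    fix x assume "x \<in> {tp u d |u d. u \<in> A \<and> d \<in> D}"
    then obtain u d where "x = tp u d" "d \<in> D" by auto
    moreover have "(\<lambda>q. tp u d (p,q)) = sc (u p) d" by (auto simp: sc_def)
    ultimately show "x \<in> {Y. (\<lambda>q. Y (p, q)) \<in> D}"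
      using assms(2) unfolding ksubspace_eq ksc.subspace_def by auto
  qed
  then show ?thesis by simp
qed

lemma tensor_eval2:
  fixes Y :: "'a \<times> 'b \<Rightarrow> 'k::field"
  assumes "Y \<in> tensor_sub A D" "ksubspace A"
  shows "(\<lambda>p. Y (p,q)) \<in> A"
proof -
  have "Y \<in> {Y. (\<lambda>p. Y (p,q)) \<in> A}"
    using assms(1) unfolding tensor_sub_def kspan_eq
  proof (rule ksc.span_subspace_induct)
    show "ksc.subspace {Y. (\<lambda>p. Y (p, q)) \<in> A}"
    proof -
      have z: "(\<lambda>p. (0::'a \<times> 'b \<Rightarrow> 'k) (p, q)) = 0" by (simp add: fun_eq_iff)
      have a: "\<And>x y::'a \<times> 'b \<Rightarrow> 'k. (\<lambda>p. (x + y) (p, q)) = (\<lambda>p. x (p, q)) + (\<lambda>p. y (p, q))" by (simp add: fun_eq_iff)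
      have s: "\<And>c (x::'a \<times> 'b \<Rightarrow> 'k). (\<lambda>p. sc c x (p, q)) = sc c (\<lambda>p. x (p, q))" by (simp add: fun_eq_iff)
      show ?thesis
        using assms(2) unfolding ksubspace_eq ksc.subspace_def mem_Collect_eq z a s by auto
    qed
  next
    fix x assume "x \<in> {tp u d |u d. u \<in> A \<and> d \<in> D}"
    then obtain u d where "x = tp u d" "u \<in> A" by auto
    moreover have "(\<lambda>p. tp u d (p,q)) = sc (d q) u" by (auto simp: sc_def)
    ultimately show "x \<in> {Y. (\<lambda>p. Y (p, q)) \<in> A}"
      using assms(2) unfolding ksubspace_eq ksc.subspace_def by auto
  qed
  then show ?thesis by simp
qed

lemma ten_sum: "(\<And>i. i \<in> I \<Longrightarrow> h i \<in> tensor_sub A B) \<Longrightarrow> sum h I \<in> tensor_sub A B"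
  unfolding tensor_sub_def kspan_eq by (rule ksc.span_sum)
lemma ten_sc: "Y \<in> tensor_sub A B \<Longrightarrow> sc c Y \<in> tensor_sub A B"
  unfolding tensor_sub_def kspan_eq by (rule ksc.span_scale)

lemma tp_in_tensor: "u \<in> A \<Longrightarrow> d \<in> D \<Longrightarrow> tp u d \<in> tensor_sub A D"
  unfolding tensor_sub_def kspan_eq by (rule ksc.span_base) auto


locale Lset = comm_group G for G :: "'g monoid" (structure) +
  fixes F :: "'f monoid" and lhd :: "'g \<Rightarrow> 'f \<Rightarrow> 'g" and rhd :: "'g \<Rightarrow> 'f \<Rightarrow> 'f"
    and f :: 'f and a :: "'g \<Rightarrow> 'k::field" and T :: "'g set"
  assumes grpF: "group F" and finG: "finite (carrier G)" and mp: "matched_pair F G lhd rhd"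
    and fF: "f \<in> carrier F"
    and oc: "onedim_comodule G (stab G rhd f) a"
    and TG: "T \<subseteq> carrier G" and oneT: "\<one>\<^bsub>G\<^esub> \<in> T"
    and cos: "\<forall>x\<in>carrier G. \<exists>!z. z \<in> T \<and> x \<in> stab G rhd f #>\<^bsub>G\<^esub> z"
begin

abbreviation "K \<equiv> stab G rhd f"

lemma rhd_closed: "g \<in> carrier G \<Longrightarrow> y \<in> carrier F \<Longrightarrow> rhd g y \<in> carrier F"
  using mp by (simp add: matched_pair_def)
lemma rhd_one: "y \<in> carrier F \<Longrightarrow> rhd \<one> y = y"
  using mp by (simp add: matched_pair_def)
lemma rhd_mult: "g \<in> carrier G \<Longrightarrow> g' \<in> carrier G \<Longrightarrow> y \<in> carrier F \<Longrightarrow> rhd (g \<otimes> g') y = rhd g (rhd g' y)"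
  using mp by (simp add: matched_pair_def)
lemma rhd_inv: "g \<in> carrier G \<Longrightarrow> y \<in> carrier F \<Longrightarrow> rhd (inv g) (rhd g y) = y"
  by (simp add: rhd_mult[symmetric] rhd_one)

lemma K_iff: "k \<in> K \<longleftrightarrow> k \<in> carrier G \<and> rhd k f = f"
  by (simp add: stab_def)
lemma K_sub: "K \<subseteq> carrier G" by (auto simp: K_iff)
lemma finK: "finite K" using finG K_sub finite_subset by blast
lemma finT: "finite T" using finG TG finite_subset by blast
lemma one_K: "\<one> \<in> K" by (simp add: K_iff rhd_one fF)
lemma K_mult: "k \<in> K \<Longrightarrow> k' \<in> K \<Longrightarrow> k \<otimes> k' \<in> K"
  by (simp add: K_iff rhd_mult fF)
lemma K_inv: "k \<in> K \<Longrightarrow> inv k \<in> K"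
  by (metis K_iff inv_closed rhd_inv fF)
lemma K_mult_iff: "k \<in> K \<Longrightarrow> y \<in> carrier G \<Longrightarrow> k \<otimes> y \<in> K \<longleftrightarrow> y \<in> K"
proof
  assume "k \<in> K" "y \<in> carrier G" "k \<otimes> y \<in> K"
  then have "inv k \<otimes> (k \<otimes> y) \<in> K" by (simp add: K_inv K_mult)
  then show "y \<in> K" using \<open>k \<in> K\<close> \<open>y \<in> carrier G\<close> K_sub
    by (metis inv_solve_left' m_closed subsetD)
qed (simp add: K_mult)

lemma a_props: "a \<one> = 1" "k \<in> K \<Longrightarrow> k' \<in> K \<Longrightarrow> a (k \<otimes> k') = a k * a k'"
proof -
  define c where "c = (\<lambda>g. if g \<in> K then a g else 0)"
  have dd: "dual_delta G K c = tp c c" and de: "dual_eps G K c = 1"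
    using oc unfolding onedim_comodule_def c_def Let_def by auto
  have "dual_eps G K c = c \<one>"
    unfolding dual_eps_def using finK one_K
    by (simp add: if_distrib[of "\<lambda>x. _ * x"] sum.delta' cong: if_cong)
  then show "a \<one> = 1" using de one_K by (simp add: c_def)
  assume k: "k \<in> K" "k' \<in> K"
  have inner: "(\<Sum>x\<in>K. tp (pb (g \<otimes> inv x)) (pb x)) (k, k') = (if g = k \<otimes> k' then 1 else (0::'k))"
    if g: "g \<in> K" for g
  proof -
    have "(\<Sum>x\<in>K. tp (pb (g \<otimes> inv x)) (pb x)) (k, k') =
          (\<Sum>x\<in>K. if x = k' then (if k = g \<otimes> inv k' then 1 else 0) else (0::'k))"
      unfolding sum_fun_apply by (rule sum.cong) (auto simp: pb_def)
    also have "\<dots> = (if g = k \<otimes> k' then 1 else 0)"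
      using k g K_sub finK by (auto simp: sum.delta inv_solve_right subsetD)
    finally show ?thesis .
  qed
  have "dual_delta G K c (k, k') = (\<Sum>g\<in>K. c g * (if g = k \<otimes> k' then 1 else 0))"
    unfolding dual_delta_def sum_fun_apply sc_apply
    by (rule sum.cong) (simp_all only: inner inner[unfolded sum_fun_apply])
  also have "\<dots> = c (k \<otimes> k')"
    using finK K_mult[OF k] by (simp add: if_distrib[of "\<lambda>x. _ * x"] sum.delta' cong: if_cong)
  finally show "a (k \<otimes> k') = a k * a k'"
    using dd K_mult[OF k] k by (simp add: c_def)
qed

lemma a_one[simp]: "a \<one> = 1" by (rule a_props(1))
lemma a_mult: "k \<in> K \<Longrightarrow> k' \<in> K \<Longrightarrow> a (k \<otimes> k') = a k * a k'" by (rule a_props(2))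
lemma a_nz: "k \<in> K \<Longrightarrow> a k \<noteq> 0"
  using a_mult[of k "inv k"] K_inv K_sub by (auto simp: subsetD)

lemma rep_ex: "x \<in> carrier G \<Longrightarrow> \<exists>!z. z \<in> T \<and> x \<otimes> inv z \<in> K"
proof -
  assume x: "x \<in> carrier G"
  have eq: "x \<in> K #> z \<longleftrightarrow> x \<otimes> inv z \<in> K" if "z \<in> T" for z
  proof -
    have z: "z \<in> carrier G" using that TG by auto
    show ?thesis
    proof
      assume "x \<in> K #> z"
      then obtain k where "k \<in> K" "x = k \<otimes> z" by (auto simp: r_coset_def)
      then show "x \<otimes> inv z \<in> K" using z K_sub by (auto simp: m_assoc subsetD)
    next
      assume "x \<otimes> inv z \<in> K"
      moreover have "x = (x \<otimes> inv z) \<otimes> z" using x z by (simp add: m_assoc)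
      ultimately show "x \<in> K #> z" by (auto simp: r_coset_def)
    qed
  qed
  from cos x obtain z where "z \<in> T \<and> x \<in> K #> z" "\<forall>z'. z' \<in> T \<and> x \<in> K #> z' \<longrightarrow> z' = z"
    by metis
  then show ?thesis using eq by metis
qed

lemma T_uniq: "z \<in> T \<Longrightarrow> w \<in> T \<Longrightarrow> w \<otimes> inv z \<in> K \<Longrightarrow> w = z"
  using rep_ex[of w] TG one_K by (auto simp: subsetD)

definition fr :: "'g \<Rightarrow> 'f" where "fr z = rhd (inv z) f"

lemma fr_closed: "z \<in> carrier G \<Longrightarrow> fr z \<in> carrier F"
  by (simp add: fr_def rhd_closed fF)
lemma rhd_fr: "x \<in> carrier G \<Longrightarrow> z \<in> carrier G \<Longrightarrow> rhd x (fr z) = rhd (x \<otimes> inv z) f"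
  by (simp add: fr_def rhd_mult fF)
lemma fr_eq: "z \<in> T \<Longrightarrow> w \<in> T \<Longrightarrow> fr z = fr w \<Longrightarrow> z = w"
proof -
  assume zw: "z \<in> T" "w \<in> T" "fr z = fr w"
  then have G: "z \<in> carrier G" "w \<in> carrier G" using TG by auto
  have "rhd (w \<otimes> inv z) f = rhd w (fr z)" using G by (simp add: rhd_fr)
  also have "\<dots> = rhd w (fr w)" using zw by simp
  also have "\<dots> = f" using G by (simp add: rhd_fr rhd_one fF)
  finally have "w \<otimes> inv z \<in> K" using G by (simp add: K_iff)
  then show "z = w" using T_uniq zw by auto
qed

lemma lc1: "x \<in> carrier G \<Longrightarrow> y \<in> carrier G \<Longrightarrow> inv x \<otimes> (x \<otimes> y) = y"
  by (simp add: m_assoc[symmetric])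
lemma lc2: "x \<in> carrier G \<Longrightarrow> y \<in> carrier G \<Longrightarrow> x \<otimes> (inv x \<otimes> y) = y"
  by (simp add: m_assoc[symmetric])

lemma K_mult_iff2: "k \<in> K \<Longrightarrow> y \<in> carrier G \<Longrightarrow> y \<otimes> k \<in> K \<longleftrightarrow> y \<in> K"
  using K_mult_iff K_sub by (metis m_comm subsetD)

lemma rep_ex2: "y \<in> carrier G \<Longrightarrow> \<exists>!w. w \<in> T \<and> w \<otimes> y \<in> K"
proof -
  assume y: "y \<in> carrier G"
  have eq: "inv y \<otimes> inv w \<in> K \<longleftrightarrow> w \<otimes> y \<in> K" if "w \<in> T" for w
  proof -
    have w: "w \<in> carrier G" using that TG by auto
    have "inv (inv y \<otimes> inv w) = w \<otimes> y" using w y by (simp add: inv_mult_group)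
    then show ?thesis using K_inv w y
      by (metis inv_closed inv_inv m_closed)
  qed
  show ?thesis using rep_ex[of "inv y"] y eq by auto
qed

lemma fr_T_closed: "z \<in> T \<Longrightarrow> fr z \<in> carrier F" using TG fr_closed by auto

definition bb :: "'g \<Rightarrow> 'g \<Rightarrow> 'g \<times> 'f \<Rightarrow> 'k" where
  "bb z z' = (\<Sum>g\<in>K. sc (a g) (pf (inv z' \<otimes> g \<otimes> z) (rhd (inv z) f)))"

lemma solve1: "g \<in> carrier G \<Longrightarrow> z \<in> carrier G \<Longrightarrow> z' \<in> carrier G \<Longrightarrow>
   (x = inv z' \<otimes> g \<otimes> z) \<longleftrightarrow> (x \<in> carrier G \<and> g = z' \<otimes> x \<otimes> inv z)"
  by (auto simp: m_assoc lc1 lc2)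

lemma bb_apply: assumes "z \<in> carrier G" "z' \<in> carrier G"
  shows "bb z z' (x, f') = (if f' = fr z \<and> x \<in> carrier G \<and> z' \<otimes> x \<otimes> inv z \<in> K then a (z' \<otimes> x \<otimes> inv z) else 0)"
proof -
  have "bb z z' (x, f') = (\<Sum>g\<in>K. if g = z' \<otimes> x \<otimes> inv z then (if x \<in> carrier G \<and> f' = fr z then a g else 0) else 0)"
    unfolding bb_def sum_fun_apply
  proof (rule sum.cong[OF refl])
    fix g assume "g \<in> K"
    then have g: "g \<in> carrier G" using K_sub by auto
    show "sc (a g) (pf (inv z' \<otimes> g \<otimes> z) (rhd (inv z) f)) (x, f') =
      (if g = z' \<otimes> x \<otimes> inv z then (if x \<in> carrier G \<and> f' = fr z then a g else 0) else 0)"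
      using solve1[OF g assms, of x] by (auto simp: pf_apply fr_def)
  qed
  also have "\<dots> = (if f' = fr z \<and> x \<in> carrier G \<and> z' \<otimes> x \<otimes> inv z \<in> K then a (z' \<otimes> x \<otimes> inv z) else 0)"
    using finK by (auto simp: sum.delta)
  finally show ?thesis .
qed

lemma bb_Hspace: assumes "z \<in> carrier G" "z' \<in> carrier G" shows "bb z z' \<in> Hspace F G"
proof -
  have sub: "{p. bb z z' p \<noteq> 0} \<subseteq> carrier G \<times> {fr z}"
    using assms by (auto simp: bb_apply split: if_splits)
  moreover have "finite (carrier G \<times> {fr z})" using finG by simp
  ultimately show ?thesis unfolding Hspace_def
    using fr_closed[OF assms(1)] by (auto intro: finite_subset)
qed

definition vv :: "'g \<Rightarrow> 'g \<times> 'f \<Rightarrow> 'k" where "vv z = bb z \<one>"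

lemma vv_apply: assumes "z \<in> carrier G"
  shows "vv z (x, f') = (if f' = fr z \<and> x \<in> carrier G \<and> x \<otimes> inv z \<in> K then a (x \<otimes> inv z) else 0)"
  using assms by (auto simp: vv_def bb_apply)

lemma bb_pt: assumes "z \<in> T" "z' \<in> T" "w \<in> T" "w' \<in> T"
  shows "bb w w' (inv z' \<otimes> z, fr z) = (if w = z \<and> w' = z' then 1 else 0)"
proof -
  have G: "z \<in> carrier G" "z' \<in> carrier G" "w \<in> carrier G" "w' \<in> carrier G" using assms TG by auto
  show ?thesis
  proof (cases "w = z \<and> w' = z'")
    case True
    then have "w' \<otimes> (inv z' \<otimes> z) \<otimes> inv w = \<one>" using G by (simp add: m_assoc lc2)
    then show ?thesis using True G one_K by (simp add: bb_apply)
  next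
    case False
    have "bb w w' (inv z' \<otimes> z, fr z) = 0"
    proof (rule ccontr)
      assume "bb w w' (inv z' \<otimes> z, fr z) \<noteq> 0"
      then have c: "fr z = fr w" "w' \<otimes> (inv z' \<otimes> z) \<otimes> inv w \<in> K" using G by (auto simp: bb_apply split: if_splits)
      then have "z = w" using fr_eq assms by auto
      then have "w' \<otimes> inv z' \<in> K" using c G by (simp add: m_assoc)
      then have "w' = z'" using T_uniq assms by auto
      then show False using False \<open>z = w\<close> by auto
    qed
    then show ?thesis using False by simp
  qed
qed

lemma vv_pt: assumes "z \<in> T" "w \<in> T" shows "vv w (z, fr z) = (if w = z then 1 else 0)"
  using bb_pt[OF assms(1) oneT assms(2) oneT] assms TG by (auto simp: vv_def subsetD)

lemma Dl_bb_dummy: "True" by simp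

lemma Dl_bb: assumes "z \<in> T" "z' \<in> T"
  shows "Dl G rhd (bb z z') = (\<Sum>w\<in>T. tp (bb w z') (bb z w))"
proof (rule ext, clarify)
  fix x1 f1 x2 f2
  have G: "z \<in> carrier G" "z' \<in> carrier G" using assms TG by auto
  have TG': "\<And>w. w \<in> T \<Longrightarrow> w \<in> carrier G" using TG by auto
  show "Dl G rhd (bb z z') ((x1, f1), x2, f2) = (\<Sum>w\<in>T. tp (bb w z') (bb z w)) ((x1, f1), x2, f2)"
  proof (cases "x1 \<in> carrier G \<and> x2 \<in> carrier G \<and> f2 = fr z")
    case False
    then show ?thesis using G TG' by (auto simp: Dl_apply sum_fun_apply bb_apply intro!: sum.neutral)
  next
    case True
    then have x: "x1 \<in> carrier G" "x2 \<in> carrier G" and f2: "f2 = fr z" by auto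
    obtain w0 where w0: "w0 \<in> T" "w0 \<otimes> (x2 \<otimes> inv z) \<in> K"
      and uq: "\<And>w. w \<in> T \<Longrightarrow> w \<otimes> (x2 \<otimes> inv z) \<in> K \<Longrightarrow> w = w0"
      using rep_ex2[of "x2 \<otimes> inv z"] x G by auto
    have w0G: "w0 \<in> carrier G" using w0 TG by auto
    define k where "k = w0 \<otimes> x2 \<otimes> inv z"
    have k: "k \<in> K" using w0 x G w0G by (simp add: k_def m_assoc)
    have kG: "k \<in> carrier G" using k K_sub by auto
    define u where "u = z' \<otimes> x1 \<otimes> inv w0"
    have uG: "u \<in> carrier G" using G x w0G by (simp add: u_def)
    have ident: "z' \<otimes> (x1 \<otimes> x2) \<otimes> inv z = u \<otimes> k"
      using G x w0G by (simp add: u_def k_def m_assoc lc1)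
    have frw0: "fr w0 = rhd x2 (fr z)"
    proof -
      have "rhd w0 (rhd x2 (fr z)) = rhd k f"
        using G x w0G by (simp add: k_def rhd_fr rhd_mult[symmetric] fF m_assoc)
      also have "\<dots> = f" using k by (simp add: K_iff)
      finally have "rhd (inv w0) (rhd w0 (rhd x2 (fr z))) = fr w0" by (simp add: fr_def)
      then show ?thesis using rhd_inv w0G x fr_closed G rhd_closed by metis
    qed
    have others: "bb z w (x2, f2) = 0" if "w \<in> T" "w \<noteq> w0" for w
      using uq[OF that(1)] that TG' G x by (auto simp: bb_apply m_assoc)
    have "(\<Sum>w\<in>T. tp (bb w z') (bb z w)) ((x1, f1), x2, f2) =
          (\<Sum>w\<in>T. if w = w0 then bb w0 z' (x1, f1) * bb z w0 (x2, f2) else 0)"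
      unfolding sum_fun_apply by (rule sum.cong) (auto simp: others)
    also have "\<dots> = bb w0 z' (x1, f1) * bb z w0 (x2, f2)" using w0 finT by simp
    also have "\<dots> = (if f1 = fr w0 \<and> u \<in> K then a u * a k else 0)"
      using G x w0G f2 by (simp add: bb_apply u_def k_def k[unfolded k_def])
    also have "\<dots> = Dl G rhd (bb z z') ((x1, f1), x2, f2)"
      using G x f2 ident uG k kG by (auto simp: Dl_apply bb_apply frw0 K_mult_iff2 a_mult)
    finally show ?thesis by simp
  qed
qed

abbreviation "M \<equiv> induced_comodule F G rhd f a"

lemma c_apply: "(\<Sum>g\<in>K. sc (a g) (pf g f)) (g1, f1) = (if g1 \<in> K \<and> f1 = f then a g1 else 0)"
proof -
  have "(\<Sum>g\<in>K. sc (a g) (pf g f)) (g1, f1) = (\<Sum>g\<in>K. if g = g1 then (if f1 = f then a g else 0) else 0)"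
    unfolding sum_fun_apply by (rule sum.cong) (auto simp: pf_apply)
  also have "\<dots> = (if g1 \<in> K \<and> f1 = f then a g1 else 0)" using finK by (simp add: sum.delta)
  finally show ?thesis .
qed

lemma M_char: "h \<in> M \<longleftrightarrow> h \<in> Hspace F G \<and>
   (\<forall>g1\<in>K. \<forall>f1 x2 f2. (if f1 = f then a g1 * h (x2, f2) else 0) =
        (if x2 \<in> carrier G \<and> f1 = rhd x2 f2 then h (g1 \<otimes> x2, f2) else 0))"
proof (cases "h \<in> Hspace F G")
  case True
  have DD: "Delta G rhd h = Dl G rhd h" using Delta_eq[OF is_group finG True] .
  have "tp (\<Sum>g\<in>K. sc (a g) (pf g f)) h = left_coact G rhd f h \<longleftrightarrow>
     (\<forall>g1 f1 x2 f2. tp (\<Sum>g\<in>K. sc (a g) (pf g f)) h ((g1, f1), (x2, f2)) = left_coact G rhd f h ((g1, f1), (x2, f2)))"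
    by (auto simp: fun_eq_iff)
  also have "\<dots> \<longleftrightarrow> (\<forall>g1\<in>K. \<forall>f1 x2 f2. (if f1 = f then a g1 * h (x2, f2) else 0) =
        (if x2 \<in> carrier G \<and> f1 = rhd x2 f2 then h (g1 \<otimes> x2, f2) else 0))"
  proof -
    have pt: "(tp (\<Sum>g\<in>K. sc (a g) (pf g f)) h ((g1, f1), (x2, f2)) = left_coact G rhd f h ((g1, f1), (x2, f2)))
      \<longleftrightarrow> (g1 \<in> K \<longrightarrow> (if f1 = f then a g1 * h (x2, f2) else 0) =
        (if x2 \<in> carrier G \<and> f1 = rhd x2 f2 then h (g1 \<otimes> x2, f2) else 0))" for g1 f1 x2 f2
    proof (cases "g1 \<in> K")
      case True
      then have g1G: "g1 \<in> carrier G" using K_sub by auto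
      have e1: "tp (\<Sum>g\<in>K. sc (a g) (pf g f)) h ((g1, f1), (x2, f2)) = (if f1 = f then a g1 * h (x2, f2) else 0)"
        by (simp only: tp_apply c_apply) (use True in simp)
      have e2: "left_coact G rhd f h ((g1, f1), (x2, f2)) = (if x2 \<in> carrier G \<and> f1 = rhd x2 f2 then h (g1 \<otimes> x2, f2) else 0)"
        unfolding left_coact_def DD using True g1G by (simp add: Dl_apply)
      show ?thesis by (simp only: e1 e2) (use True in simp)
    next
      case False
      have e1: "tp (\<Sum>g\<in>K. sc (a g) (pf g f)) h ((g1, f1), (x2, f2)) = 0"
        by (simp only: tp_apply c_apply) (use False in simp)
      have e2: "left_coact G rhd f h ((g1, f1), (x2, f2)) = 0"
        unfolding left_coact_def using False by simp
      show ?thesis by (simp only: e1 e2) (use False in simp)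
    qed
    have q: "\<And>P. (\<forall>g1 f1 x2 f2. g1 \<in> K \<longrightarrow> P g1 f1 x2 f2) \<longleftrightarrow> (\<forall>g1\<in>K. \<forall>f1 x2 f2. P g1 f1 x2 f2)"
      by blast
    show ?thesis by (simp only: pt q)
  qed
  finally show ?thesis using True by (simp add: induced_comodule_def)
qed (simp add: induced_comodule_def)

lemma M_Hspace: "h \<in> M \<Longrightarrow> h \<in> Hspace F G" by (simp add: induced_comodule_def)

lemma M_subspace: "ksubspace M"
  unfolding ksubspace_eq ksc.subspace_def
proof (intro conjI ballI allI)
  show "0 \<in> M" unfolding M_char by (simp add: Hspace_def)
next
  fix x y assume xy: "x \<in> M" "y \<in> M"
  then have "x + y \<in> Hspace F G" using Hspace_add M_Hspace by blast
  moreover have "(if f1 = f then a g1 * (x + y) (x2, f2) else 0) =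
        (if x2 \<in> carrier G \<and> f1 = rhd x2 f2 then (x + y) (g1 \<otimes> x2, f2) else 0)"
    if g1: "g1 \<in> K" for g1 f1 x2 f2
  proof -
    have "(if f1 = f then a g1 * x (x2, f2) else 0) =
        (if x2 \<in> carrier G \<and> f1 = rhd x2 f2 then x (g1 \<otimes> x2, f2) else 0)"
         "(if f1 = f then a g1 * y (x2, f2) else 0) =
        (if x2 \<in> carrier G \<and> f1 = rhd x2 f2 then y (g1 \<otimes> x2, f2) else 0)"
      using xy g1 unfolding M_char by blast+
    moreover have "(if f1 = f then a g1 * (x + y) (x2, f2) else 0) =
       (if f1 = f then a g1 * x (x2, f2) else 0) + (if f1 = f then a g1 * y (x2, f2) else 0)"
      by (simp add: distrib_left)
    moreover have "(if x2 \<in> carrier G \<and> f1 = rhd x2 f2 then (x + y) (g1 \<otimes> x2, f2) else 0) =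
       (if x2 \<in> carrier G \<and> f1 = rhd x2 f2 then x (g1 \<otimes> x2, f2) else 0) +
       (if x2 \<in> carrier G \<and> f1 = rhd x2 f2 then y (g1 \<otimes> x2, f2) else 0)"
      by simp
    ultimately show ?thesis by simp
  qed
  ultimately show "x + y \<in> M" unfolding M_char by blast
next
  fix c x assume x: "x \<in> M"
  then have "sc c x \<in> Hspace F G" using Hspace_sc M_Hspace by blast
  moreover have "(if f1 = f then a g1 * sc c x (x2, f2) else 0) =
        (if x2 \<in> carrier G \<and> f1 = rhd x2 f2 then sc c x (g1 \<otimes> x2, f2) else 0)"
    if g1: "g1 \<in> K" for g1 f1 x2 f2
  proof -
    have "(if f1 = f then a g1 * x (x2, f2) else 0) =
        (if x2 \<in> carrier G \<and> f1 = rhd x2 f2 then x (g1 \<otimes> x2, f2) else 0)"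
      using x g1 unfolding M_char by blast
    moreover have "(if f1 = f then a g1 * sc c x (x2, f2) else 0) = c * (if f1 = f then a g1 * x (x2, f2) else 0)"
      by (simp add: mult.left_commute)
    moreover have "(if x2 \<in> carrier G \<and> f1 = rhd x2 f2 then sc c x (g1 \<otimes> x2, f2) else 0) =
       c * (if x2 \<in> carrier G \<and> f1 = rhd x2 f2 then x (g1 \<otimes> x2, f2) else 0)"
      by simp
    ultimately show ?thesis by simp
  qed
  ultimately show "sc c x \<in> M" unfolding M_char by blast
qed

lemma vv_M: assumes "z \<in> T" shows "vv z \<in> M"
proof -
  have z: "z \<in> carrier G" using assms TG by auto
  have "vv z \<in> Hspace F G" using bb_Hspace[OF z] by (simp add: vv_def)
  moreover have "(if f1 = f then a g1 * vv z (x2, f2) else 0) =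
        (if x2 \<in> carrier G \<and> f1 = rhd x2 f2 then vv z (g1 \<otimes> x2, f2) else 0)"
    if g1: "g1 \<in> K" for g1 f1 x2 f2
  proof -
    have g1G: "g1 \<in> carrier G" using g1 K_sub by auto
    show ?thesis
    proof (cases "x2 \<in> carrier G \<and> f2 = fr z")
      case False
      then show ?thesis using z g1G by (auto simp: vv_apply)
    next
      case True
      then have x2: "x2 \<in> carrier G" and f2: "f2 = fr z" by auto
      define y where "y = x2 \<otimes> inv z"
      have yG: "y \<in> carrier G" using x2 z by (simp add: y_def)
      have r: "rhd x2 f2 = rhd y f" using x2 z f2 by (simp add: rhd_fr y_def)
      have e: "g1 \<otimes> x2 \<otimes> inv z = g1 \<otimes> y" using x2 z g1G by (simp add: y_def m_assoc)
      have v1: "vv z (x2, f2) = (if y \<in> K then a y else 0)"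
        using x2 z f2 by (simp add: vv_apply y_def)
      have v2: "vv z (g1 \<otimes> x2, f2) = (if g1 \<otimes> y \<in> K then a (g1 \<otimes> y) else 0)"
        using x2 z f2 g1G by (simp add: vv_apply e)
      show ?thesis
      proof (cases "y \<in> K")
        case True
        then have r': "rhd x2 f2 = f" using r by (simp add: K_iff)
        show ?thesis unfolding v1 v2 r' using True g1 K_mult x2 by (simp add: a_mult)
      next
        case False
        then have "g1 \<otimes> y \<notin> K" using K_mult_iff g1 yG by auto
        then show ?thesis unfolding v1 v2 using False by simp
      qed
    qed
  qed
  ultimately show ?thesis unfolding M_char by blast
qed

lemma M_decomp: assumes h: "h \<in> M" shows "h = (\<Sum>z\<in>T. sc (h (z, fr z)) (vv z))"
proof (rule ext, clarify)
  fix x f'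
  have hH: "h \<in> Hspace F G" using h M_Hspace by auto
  have hc: "\<And>g1 f1 x2 f2. g1 \<in> K \<Longrightarrow> (if f1 = f then a g1 * h (x2, f2) else 0) =
        (if x2 \<in> carrier G \<and> f1 = rhd x2 f2 then h (g1 \<otimes> x2, f2) else 0)"
    using h unfolding M_char by blast
  have TG': "\<And>w. w \<in> T \<Longrightarrow> w \<in> carrier G" using TG by auto
  show "h (x, f') = (\<Sum>z\<in>T. sc (h (z, fr z)) (vv z)) (x, f')"
  proof (cases "x \<in> carrier G \<and> f' \<in> carrier F")
    case False
    then have "h (x, f') = 0" using hH by (auto simp: Hspace_def)
    moreover have "vv z (x, f') = 0" if "z \<in> T" for z
      using False TG'[OF that] fr_closed[OF TG'[OF that]] by (auto simp: vv_apply)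
    ultimately show ?thesis by (simp add: sum_fun_apply)
  next
    case True
    then have x: "x \<in> carrier G" and f': "f' \<in> carrier F" by auto
    obtain w where w: "w \<in> T" "x \<otimes> inv w \<in> K" and uq: "\<And>z. z \<in> T \<Longrightarrow> x \<otimes> inv z \<in> K \<Longrightarrow> z = w"
      using rep_ex[OF x] by auto
    have wG: "w \<in> carrier G" using w TG by auto
    define k where "k = x \<otimes> inv w"
    have k: "k \<in> K" using w by (simp add: k_def)
    have kG: "k \<in> carrier G" using k K_sub by auto
    have others: "vv z (x, f') = 0" if "z \<in> T" "z \<noteq> w" for z
    proof -
      have "x \<otimes> inv z \<notin> K" using uq that by blast
      then show ?thesis using TG'[OF that(1)] by (simp add: vv_apply)
    qed
    have vw: "vv w (x, f') = (if f' = fr w then a k else 0)"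
      using wG x k by (simp add: vv_apply k_def)
    have "(\<Sum>z\<in>T. sc (h (z, fr z)) (vv z)) (x, f') = (\<Sum>z\<in>T. if z = w then h (w, fr w) * vv w (x, f') else 0)"
      unfolding sum_fun_apply
    proof (rule sum.cong[OF refl])
      fix z assume z: "z \<in> T"
      show "sc (h (z, fr z)) (vv z) (x, f') = (if z = w then h (w, fr w) * vv w (x, f') else 0)"
        using others[OF z] by (cases "z = w") simp_all
    qed
    also have "\<dots> = h (w, fr w) * (if f' = fr w then a k else 0)"
      using w(1) finT by (simp only: sum.delta' vw) simp
    also have "\<dots> = h (x, f')"
    proof (cases "f' = fr w")
      case True
      have "rhd w (fr w) = f" using wG by (simp add: rhd_fr fF rhd_one)
      moreover have "k \<otimes> w = x" using x wG by (simp add: k_def m_assoc)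
      ultimately show ?thesis using hc[OF k, of f w "fr w"] True wG by (simp add: mult.commute)
    next
      case False
      have "rhd x f' \<noteq> f"
      proof
        assume r: "rhd x f' = f"
        have "f' = rhd (inv x) f" using rhd_inv[OF x f'] r by simp
        also have "\<dots> = rhd (inv x) (rhd k f)" using k by (simp add: K_iff)
        also have "\<dots> = rhd (inv x \<otimes> k) f" using x kG by (simp add: rhd_mult fF)
        also have "inv x \<otimes> k = inv w" using x wG by (simp add: k_def lc1)
        finally show False using False by (simp add: fr_def)
      qed
      then show ?thesis using hc[OF one_K, of "rhd x f'" x f'] x False by simp
    qed
    finally show ?thesis by simp
  qed
qed

lemma M_span: "M = kspan (vv ` T)"
proof
  show "M \<subseteq> kspan (vv ` T)"
  proof
    fix h assume h: "h \<in> M"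
    have "(\<Sum>z\<in>T. sc (h (z, fr z)) (vv z)) \<in> kspan (vv ` T)"
      unfolding kspan_eq by (intro ksc.span_sum ksc.span_scale ksc.span_base) auto
    then show "h \<in> kspan (vv ` T)" by (simp only: M_decomp[OF h, symmetric])
  qed
next
  show "kspan (vv ` T) \<subseteq> M"
    unfolding kspan_eq using M_subspace vv_M
    by (intro ksc.span_minimal) (auto simp: ksubspace_eq)
qed

lemma Dl_vv: "z \<in> T \<Longrightarrow> Dl G rhd (vv z) = (\<Sum>w\<in>T. tp (vv w) (bb z w))"
  using Dl_bb[OF _ oneT] by (simp add: vv_def)

lemma Delta_M: assumes h: "h \<in> M"
  shows "Delta G rhd h = (\<Sum>z\<in>T. sc (h (z, fr z)) (\<Sum>w\<in>T. tp (vv w) (bb z w)))"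
proof -
  have "Delta G rhd h = Dl G rhd h" using Delta_eq[OF is_group finG M_Hspace[OF h]] .
  also have "\<dots> = Dl G rhd (\<Sum>z\<in>T. sc (h (z, fr z)) (vv z))" by (simp only: M_decomp[OF h, symmetric])
  also have "\<dots> = (\<Sum>z\<in>T. sc (h (z, fr z)) (\<Sum>w\<in>T. tp (vv w) (bb z w)))"
    by (simp add: Dl_sum Dl_sc Dl_vv)
  finally show ?thesis .
qed

lemma Delta_M_apply: assumes h: "h \<in> M" and w: "w \<in> T"
  shows "Delta G rhd h ((w, fr w), q) = (\<Sum>z\<in>T. h (z, fr z) * bb z w q)"
proof -
  have "Delta G rhd h ((w, fr w), q) = (\<Sum>z\<in>T. h (z, fr z) * (\<Sum>w'\<in>T. vv w' (w, fr w) * bb z w' q))"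
    unfolding Delta_M[OF h] by (simp add: sum_fun_apply)
  also have "\<dots> = (\<Sum>z\<in>T. h (z, fr z) * bb z w q)"
  proof (rule sum.cong[OF refl])
    fix z assume "z \<in> T"
    have "(\<Sum>w'\<in>T. vv w' (w, fr w) * bb z w' q) = (\<Sum>w'\<in>T. if w' = w then bb z w q else 0)"
      by (rule sum.cong[OF refl]) (simp add: vv_pt[OF w])
    also have "\<dots> = bb z w q" using w finT by simp
    finally show "h (z, fr z) * (\<Sum>w'\<in>T. vv w' (w, fr w) * bb z w' q) = h (z, fr z) * bb z w q" by simp
  qed
  finally show ?thesis .
qed

abbreviation "Bset \<equiv> {bb z z' | z z'. z \<in> T \<and> z' \<in> T}"
abbreviation "DD \<equiv> kspan Bset"

lemma bb_DD: "z \<in> T \<Longrightarrow> z' \<in> T \<Longrightarrow> bb z z' \<in> DD"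
  unfolding kspan_eq by (rule ksc.span_base) auto

lemma DD_subspace: "ksubspace DD" by (simp add: ksubspace_eq kspan_eq)

lemma DD_Hspace: "DD \<subseteq> Hspace F G"
  unfolding kspan_eq using Hspace_subspace bb_Hspace TG
  by (intro ksc.span_minimal) (auto simp: ksubspace_eq subsetD)

lemma tensor_subspace: "ksubspace (tensor_sub A B)"
  by (simp add: tensor_sub_def ksubspace_eq kspan_eq)

lemma Dl_DD: assumes "d \<in> DD" shows "Dl G rhd d \<in> tensor_sub DD DD"
proof -
  have "d \<in> ksc.span Bset" using assms by (simp add: kspan_eq)
  then have "d \<in> {d. Dl G rhd d \<in> tensor_sub DD DD}"
  proof (rule ksc.span_subspace_induct)
    show "ksc.subspace {d. Dl G rhd d \<in> tensor_sub DD DD}"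
      using tensor_subspace[of DD DD] unfolding ksubspace_eq ksc.subspace_def
      by (simp add: Dl_zero Dl_add Dl_sc)
  next
    fix x assume "x \<in> Bset"
    then obtain z z' where zz: "z \<in> T" "z' \<in> T" "x = bb z z'" by auto
    have "(\<Sum>w\<in>T. tp (bb w z') (bb z w)) \<in> tensor_sub DD DD"
      by (intro ten_sum tp_in_tensor bb_DD) (use zz in auto)
    then show "x \<in> {d. Dl G rhd d \<in> tensor_sub DD DD}" using zz by (simp add: Dl_bb)
  qed
  then show ?thesis by simp
qed

lemma Delta_DD: "d \<in> DD \<Longrightarrow> Delta G rhd d = Dl G rhd d"
  using Delta_eq[OF is_group finG] DD_Hspace by auto

lemma subcoalg_DD: "subcoalgebra F G rhd DD"
  unfolding subcoalgebra_def using DD_Hspace DD_subspace Delta_DD Dl_DD by auto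

lemma Delta_M_in: assumes h: "h \<in> M" shows "Delta G rhd h \<in> tensor_sub M DD"
  unfolding Delta_M[OF h]
  by (intro ten_sum ten_sc tp_in_tensor vv_M bb_DD) auto

lemma subcoalg_subspace: "subcoalgebra F G rhd D' \<Longrightarrow> ksubspace D'"
  by (simp add: subcoalgebra_def)

lemma DD_minimal: assumes D': "subcoalgebra F G rhd D'" and MD: "Delta G rhd ` M \<subseteq> tensor_sub M D'"
  shows "DD \<subseteq> D'"
proof -
  have "bb z w \<in> D'" if z: "z \<in> T" and w: "w \<in> T" for z w
  proof -
    have Y: "Delta G rhd (vv z) \<in> tensor_sub M D'" using MD vv_M[OF z] by auto
    have "(\<lambda>q. Delta G rhd (vv z) ((w, fr w), q)) \<in> D'"
      by (rule tensor_eval1[OF Y subcoalg_subspace[OF D']])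
    moreover have "(\<lambda>q. Delta G rhd (vv z) ((w, fr w), q)) = bb z w"
    proof
      fix q
      have "Delta G rhd (vv z) ((w, fr w), q) = (\<Sum>z'\<in>T. vv z (z', fr z') * bb z' w q)"
        by (rule Delta_M_apply[OF vv_M[OF z] w])
      also have "\<dots> = (\<Sum>z'\<in>T. if z' = z then bb z w q else 0)"
        by (rule sum.cong[OF refl]) (simp add: vv_pt z)
      also have "\<dots> = bb z w q" using z finT by simp
      finally show "Delta G rhd (vv z) ((w, fr w), q) = bb z w q" .
    qed
    ultimately show ?thesis by simp
  qed
  then show ?thesis
    unfolding kspan_eq using subcoalg_subspace[OF D']
    by (intro ksc.span_minimal) (auto simp: ksubspace_eq)
qed

theorem is_cf_DD: "is_cf F G rhd M DD"
  unfolding is_cf_def using subcoalg_DD Delta_M_in DD_minimal by blast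

definition ptt :: "'g \<Rightarrow> 'g \<Rightarrow> 'g \<times> 'f" where "ptt z z' = (inv z' \<otimes> z, fr z)"

lemma bb_ptt: "z \<in> T \<Longrightarrow> z' \<in> T \<Longrightarrow> w \<in> T \<Longrightarrow> w' \<in> T \<Longrightarrow>
   bb w w' (ptt z z') = (if w = z \<and> w' = z' then 1 else 0)"
  unfolding ptt_def by (rule bb_pt)

definition Phi :: "('g \<times> 'f \<Rightarrow> 'k) \<Rightarrow> ('g \<times> 'f \<Rightarrow> 'k)" where
  "Phi d = (\<lambda>x. \<Sum>p\<in>T \<times> T. d (ptt (fst p) (snd p)) * bb (fst p) (snd p) x)"

lemma D_decomp: assumes "d \<in> DD" shows "d = Phi d"
proof -
  have "d \<in> ksc.span Bset" using assms by (simp add: kspan_eq)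
  then have "d \<in> {d. d = Phi d}"
  proof (rule ksc.span_subspace_induct)
    show "ksc.subspace {d. d = Phi d}"
      unfolding ksc.subspace_def
    proof (intro conjI ballI allI)
      show "0 \<in> {d. d = Phi d}" by (simp add: Phi_def fun_eq_iff)
    next
      fix x y assume "x \<in> {d. d = Phi d}" "y \<in> {d. d = Phi d}"
      then have "x = Phi x" "y = Phi y" by auto
      moreover have "Phi (x + y) = Phi x + Phi y"
        by (simp add: Phi_def fun_eq_iff distrib_right sum.distrib)
      ultimately show "x + y \<in> {d. d = Phi d}" by simp
    next
      fix c x assume "x \<in> {d. d = Phi d}"
      then have "x = Phi x" by auto
      moreover have "Phi (sc c x) = sc c (Phi x)"
        by (simp add: Phi_def fun_eq_iff sum_distrib_left mult.assoc)
      ultimately show "sc c x \<in> {d. d = Phi d}" by simp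
    qed
  next
    fix x assume "x \<in> Bset"
    then obtain z z' where zz: "z \<in> T" "z' \<in> T" "x = bb z z'" by auto
    have "Phi (bb z z') = bb z z'"
    proof
      fix y
      have "Phi (bb z z') y = (\<Sum>p\<in>T \<times> T. if p = (z, z') then bb z z' y else 0)"
        unfolding Phi_def
        by (rule sum.cong[OF refl]) (use zz in \<open>auto simp: bb_ptt split: if_splits\<close>)
      also have "\<dots> = bb z z' y" using zz finT by simp
      finally show "Phi (bb z z') y = bb z z' y" .
    qed
    then show "x \<in> {d. d = Phi d}" using zz by simp
  qed
  then show ?thesis by simp
qed

lemma DD_nz: assumes "d \<in> DD" "d \<noteq> 0" shows "\<exists>z0\<in>T. \<exists>z0'\<in>T. d (ptt z0 z0') \<noteq> 0"
proof (rule ccontr)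
  assume "\<not> ?thesis"
  then have "Phi d = 0" by (auto simp: Phi_def fun_eq_iff intro!: sum.neutral)
  then show False using D_decomp[OF assms(1)] assms(2) by simp
qed

definition ell :: "'g \<times> 'f \<Rightarrow> ('g \<times> 'f \<Rightarrow> 'k) \<Rightarrow> ('g \<times> 'f \<Rightarrow> 'k)" where
  "ell P h = (\<lambda>q. Dl G rhd h (P, q))"
definition rr :: "'g \<times> 'f \<Rightarrow> ('g \<times> 'f \<Rightarrow> 'k) \<Rightarrow> ('g \<times> 'f \<Rightarrow> 'k)" where
  "rr Q h = (\<lambda>p. Dl G rhd h (p, Q))"

lemma Dl_pt_add: "Dl G rhd (x + y) Y = Dl G rhd x Y + Dl G rhd y Y"
  by (simp add: Dl_add)
lemma Dl_pt_sc: "Dl G rhd (sc c x) Y = c * Dl G rhd x Y"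
  by (simp add: Dl_sc)
lemma Dl_pt_zero: "Dl G rhd 0 Y = 0"
  by (simp add: Dl_zero)

lemma ell_lin: "ell P (x + y) = ell P x + ell P y" "ell P (sc c x) = sc c (ell P x)" "ell P 0 = 0"
  by (simp_all add: ell_def fun_eq_iff Dl_pt_add Dl_pt_sc Dl_pt_zero)
lemma rr_lin: "rr P (x + y) = rr P x + rr P y" "rr P (sc c x) = sc c (rr P x)" "rr P 0 = 0"
  by (simp_all add: rr_def fun_eq_iff Dl_pt_add Dl_pt_sc Dl_pt_zero)

lemma ell_bb: assumes "z \<in> T" "z' \<in> T" "w0 \<in> T" "z0' \<in> T"
  shows "ell (ptt w0 z0') (bb z z') = (if z' = z0' then bb z w0 else 0)"
proof
  fix q
  have "ell (ptt w0 z0') (bb z z') q = (\<Sum>w\<in>T. bb w z' (ptt w0 z0') * bb z w q)"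
    by (simp add: ell_def Dl_bb assms sum_fun_apply)
  also have "\<dots> = (\<Sum>w\<in>T. if w = w0 then (if z' = z0' then bb z w0 q else 0) else 0)"
    by (rule sum.cong[OF refl]) (use assms in \<open>auto simp: bb_ptt\<close>)
  also have "\<dots> = (if z' = z0' then bb z w0 else 0) q" using assms finT by simp
  finally show "ell (ptt w0 z0') (bb z z') q = (if z' = z0' then bb z w0 else 0) q" .
qed

lemma rr_bb: assumes "z \<in> T" "w0 \<in> T" "z0 \<in> T" "u0 \<in> T"
  shows "rr (ptt z0 u0) (bb z w0) = (if z = z0 then bb u0 w0 else 0)"
proof
  fix p
  have "rr (ptt z0 u0) (bb z w0) p = (\<Sum>u\<in>T. bb u w0 p * bb z u (ptt z0 u0))"
    by (simp add: rr_def Dl_bb assms sum_fun_apply)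
  also have "\<dots> = (\<Sum>u\<in>T. if u = u0 then (if z = z0 then bb u0 w0 p else 0) else 0)"
    by (rule sum.cong[OF refl]) (use assms in \<open>auto simp: bb_ptt\<close>)
  also have "\<dots> = (if z = z0 then bb u0 w0 else 0) p" using assms finT by simp
  finally show "rr (ptt z0 u0) (bb z w0) p = (if z = z0 then bb u0 w0 else 0) p" .
qed

lemma Psi_DD: assumes "d \<in> DD" "z0 \<in> T" "z0' \<in> T" "u0 \<in> T" "w0 \<in> T"
  shows "rr (ptt z0 u0) (ell (ptt w0 z0') d) = sc (d (ptt z0 z0')) (bb u0 w0)"
proof -
  let ?Psi = "\<lambda>h. rr (ptt z0 u0) (ell (ptt w0 z0') h)"
  have "d \<in> ksc.span Bset" using assms by (simp add: kspan_eq)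
  then have "d \<in> {h. ?Psi h = sc (h (ptt z0 z0')) (bb u0 w0)}"
  proof (rule ksc.span_subspace_induct)
    show "ksc.subspace {h. ?Psi h = sc (h (ptt z0 z0')) (bb u0 w0)}"
      unfolding ksc.subspace_def
      by (simp add: ell_lin rr_lin fun_eq_iff distrib_right mult.assoc)
  next
    fix x assume "x \<in> Bset"
    then obtain z z' where zz: "z \<in> T" "z' \<in> T" "x = bb z z'" by auto
    have "?Psi (bb z z') = sc (bb z z' (ptt z0 z0')) (bb u0 w0)"
      using zz assms by (simp add: ell_bb rr_bb rr_lin bb_ptt fun_eq_iff)
    then show "x \<in> {h. ?Psi h = sc (h (ptt z0 z0')) (bb u0 w0)}" using zz by simp
  qed
  then show ?thesis by simp
qed

lemma subcoalg_Dl: assumes "subcoalgebra F G rhd D'" "d \<in> D'"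
  shows "Dl G rhd d \<in> tensor_sub D' D'"
proof -
  have "d \<in> Hspace F G" "Delta G rhd d \<in> tensor_sub D' D'"
    using assms unfolding subcoalgebra_def by auto
  then show ?thesis using Delta_eq[OF is_group finG \<open>d \<in> Hspace F G\<close>] by simp
qed

theorem simple_DD: "simple_subcoalgebra F G rhd DD"
  unfolding simple_subcoalgebra_def
proof (intro conjI allI impI)
  show "subcoalgebra F G rhd DD" by (rule subcoalg_DD)
next
  have "bb \<one> \<one> (ptt \<one> \<one>) = 1" using oneT by (simp add: bb_ptt)
  then have "bb \<one> \<one> \<noteq> 0" by auto
  then show "DD \<noteq> {0}" using bb_DD[OF oneT oneT] by auto
next
  fix D' assume D': "subcoalgebra F G rhd D' \<and> D' \<subseteq> DD"
  show "D' = {0} \<or> D' = DD"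
  proof (cases "D' = {0}")
    case False
    have sub: "ksubspace D'" using D' by (simp add: subcoalgebra_def)
    then have "0 \<in> D'" by (simp add: ksubspace_eq ksc.subspace_def)
    with False obtain d where d: "d \<in> D'" "d \<noteq> 0" by auto
    then have dD: "d \<in> DD" using D' by auto
    obtain z0 z0' where z0: "z0 \<in> T" "z0' \<in> T" "d (ptt z0 z0') \<noteq> 0"
      using DD_nz[OF dD d(2)] by auto
    have "bb u0 w0 \<in> D'" if u0: "u0 \<in> T" and w0: "w0 \<in> T" for u0 w0
    proof -
      have "ell (ptt w0 z0') d \<in> D'"
        unfolding ell_def by (rule tensor_eval1[OF subcoalg_Dl[OF D'[THEN conjunct1] d(1)] sub])
      then have "rr (ptt z0 u0) (ell (ptt w0 z0') d) \<in> D'"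
        unfolding rr_def[of _ "ell (ptt w0 z0') d"]
        by (rule tensor_eval2[OF subcoalg_Dl[OF D'[THEN conjunct1]] sub])
      then have "sc (d (ptt z0 z0')) (bb u0 w0) \<in> D'"
        using Psi_DD[OF dD z0(1,2) u0 w0] by simp
      then have "sc (inverse (d (ptt z0 z0'))) (sc (d (ptt z0 z0')) (bb u0 w0)) \<in> D'"
        using sub unfolding ksubspace_eq ksc.subspace_def by blast
      then show ?thesis using z0(3) by simp
    qed
    then have "DD \<subseteq> D'"
      unfolding kspan_eq using sub
      by (intro ksc.span_minimal) (auto simp: ksubspace_eq)
    then show ?thesis using D' by auto
  qed simp
qed

lemma vv_inj: "inj_on vv T"
proof (rule inj_onI)
  fix w w' assume w: "w \<in> T" "w' \<in> T" "vv w = vv w'"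
  have "vv w' (w, fr w) = 1" using w vv_pt[of w w] by simp
  then show "w = w'" using vv_pt[OF w(1) w(2)] by (auto split: if_splits)
qed

lemma Bs0_basis: "fin_basis (vv ` T) M"
  unfolding fin_basis_def
proof (intro conjI)
  show "finite (vv ` T)" using finT by simp
  show "vv ` T \<subseteq> M" using vv_M by auto
  show "kspan (vv ` T) = M" using M_span by simp
  show "kindep (vv ` T)"
    unfolding kindep_def
  proof
    assume "ksc.dependent (vv ` T)"
    then obtain u where u: "\<exists>v\<in>vv ` T. u v \<noteq> 0" "(\<Sum>v\<in>vv ` T. sc (u v) v) = 0"
      using ksc.dependent_finite[of "vv ` T"] finT by auto
    then obtain w where w: "w \<in> T" "u (vv w) \<noteq> 0" by auto
    have "0 = (\<Sum>v\<in>vv ` T. sc (u v) v) (w, fr w)" using u by simp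
    also have "\<dots> = (\<Sum>z\<in>T. u (vv z) * vv z (w, fr w))"
      by (simp add: sum_fun_apply sum.reindex[OF vv_inj])
    also have "\<dots> = (\<Sum>z\<in>T. if z = w then u (vv w) else 0)"
      by (rule sum.cong[OF refl]) (simp add: vv_pt w)
    also have "\<dots> = u (vv w)" using w finT by simp
    finally show False using w by simp
  qed
qed

lemma Delta_vv: "z \<in> T \<Longrightarrow> Delta G rhd (vv z) = (\<Sum>w\<in>T. tp (vv w) (bb z w))"
  using Delta_eq[OF is_group finG M_Hspace[OF vv_M]] Dl_vv by simp

lemma char_witness: "\<exists>Bs c. fin_basis Bs M \<and>
        (\<forall>b\<in>Bs. Delta G rhd b = (\<Sum>b'\<in>Bs. tp b' (c b' b))) \<and>
        (\<Sum>z\<in>T. bb z z) = (\<Sum>b\<in>Bs. c b b)"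
proof (intro exI conjI ballI)
  let ?i = "the_inv_into T vv"
  show "fin_basis (vv ` T) M" by (rule Bs0_basis)
  have ii: "\<And>w. w \<in> T \<Longrightarrow> ?i (vv w) = w" using vv_inj by (simp add: the_inv_into_f_f)
  fix b assume "b \<in> vv ` T"
  then obtain z where z: "z \<in> T" "b = vv z" by auto
  show "Delta G rhd b = (\<Sum>b'\<in>vv ` T. tp b' (bb (?i b) (?i b')))"
    using z by (simp add: Delta_vv sum.reindex[OF vv_inj] ii)
next
  let ?i = "the_inv_into T vv"
  have ii: "\<And>w. w \<in> T \<Longrightarrow> ?i (vv w) = w" using vv_inj by (simp add: the_inv_into_f_f)
  show "(\<Sum>z\<in>T. bb z z) = (\<Sum>b\<in>vv ` T. bb (?i b) (?i b))"
    by (simp add: sum.reindex[OF vv_inj] ii)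
qed

lemma char_unique:
  assumes basis: "fin_basis Bs M" and rel: "\<forall>b\<in>Bs. Delta G rhd b = (\<Sum>b'\<in>Bs. tp b' (c b' b))"
  shows "(\<Sum>b\<in>Bs. c b b) = (\<Sum>z\<in>T. bb z z)"
proof -
  have finB: "finite Bs" and BM: "Bs \<subseteq> M" and ind: "\<not> ksc.dependent Bs" and spB: "ksc.span Bs = M"
    using basis by (auto simp: fin_basis_def kindep_def kspan_eq)
  have "\<forall>w\<in>T. \<exists>u. vv w = (\<Sum>b\<in>Bs. sc (u b) b)"
  proof
    fix w assume "w \<in> T"
    then have "vv w \<in> ksc.span Bs" using spB vv_M by simp
    then show "\<exists>u. vv w = (\<Sum>b\<in>Bs. sc (u b) b)" using ksc.span_finite[OF finB] by auto
  qed
  then obtain Q where Q: "\<And>w. w \<in> T \<Longrightarrow> vv w = (\<Sum>b\<in>Bs. sc (Q w b) b)" by metis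
  have PQ: "(\<Sum>b\<in>Bs. Q w b * b (z, fr z)) = (if w = z then 1 else 0)" if "w \<in> T" "z \<in> T" for w z
  proof -
    have "(\<Sum>b\<in>Bs. Q w b * b (z, fr z)) = vv w (z, fr z)"
      by (simp add: Q[OF that(1)] sum_fun_apply)
    also have "\<dots> = (if w = z then 1 else 0)" using vv_pt[OF that(2,1)] by simp
    finally show ?thesis .
  qed
  have QP: "(\<Sum>w\<in>T. b0 (w, fr w) * Q w b) = (if b = b0 then 1 else 0)" if b0: "b0 \<in> Bs" and b: "b \<in> Bs" for b0 b
  proof -
    define \<alpha> where "\<alpha> = (\<lambda>b. (\<Sum>w\<in>T. b0 (w, fr w) * Q w b))"
    define \<beta> where "\<beta> = (\<lambda>b::'g \<times> 'f \<Rightarrow> 'k. if b = b0 then (1::'k) else 0)"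
    have b0M: "b0 \<in> M" using b0 BM by auto
    have e1: "b0 = (\<Sum>b\<in>Bs. sc (\<alpha> b) b)"
    proof -
      have "b0 = (\<Sum>w\<in>T. sc (b0 (w, fr w)) (vv w))" by (rule M_decomp[OF b0M])
      also have "\<dots> = (\<Sum>w\<in>T. sc (b0 (w, fr w)) (\<Sum>b\<in>Bs. sc (Q w b) b))"
        by (rule sum.cong[OF refl]) (simp add: Q)
      also have "\<dots> = (\<Sum>b\<in>Bs. sc (\<alpha> b) b)"
      proof
        fix x
        have "(\<Sum>w\<in>T. sc (b0 (w, fr w)) (\<Sum>b\<in>Bs. sc (Q w b) b)) x =
              (\<Sum>w\<in>T. \<Sum>b\<in>Bs. b0 (w, fr w) * Q w b * b x)"
          by (simp add: sum_fun_apply sum_distrib_left mult.assoc)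
        also have "\<dots> = (\<Sum>b\<in>Bs. \<Sum>w\<in>T. b0 (w, fr w) * Q w b * b x)" by (rule sum.swap)
        also have "\<dots> = (\<Sum>b\<in>Bs. sc (\<alpha> b) b) x"
          by (simp add: sum_fun_apply \<alpha>_def sum_distrib_right)
        finally show "(\<Sum>w\<in>T. sc (b0 (w, fr w)) (\<Sum>b\<in>Bs. sc (Q w b) b)) x = (\<Sum>b\<in>Bs. sc (\<alpha> b) b) x" .
      qed
      finally show ?thesis .
    qed
    have e2: "b0 = (\<Sum>b\<in>Bs. sc (\<beta> b) b)"
    proof -
      have "(\<Sum>b\<in>Bs. sc (\<beta> b) b) = (\<Sum>b\<in>Bs. if b = b0 then b0 else 0)"
        by (rule sum.cong[OF refl]) (simp add: \<beta>_def sc_def fun_eq_iff)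
      also have "\<dots> = b0" using b0 finB by simp
      finally show ?thesis by simp
    qed
    have "(\<Sum>b\<in>Bs. sc (\<alpha> b - \<beta> b) b) = (\<Sum>b\<in>Bs. sc (\<alpha> b) b) - (\<Sum>b\<in>Bs. sc (\<beta> b) b)"
      by (simp add: ksc.scale_left_diff_distrib sum_subtractf)
    also have "\<dots> = 0" using e1 e2 by simp
    finally have s0: "(\<Sum>b\<in>Bs. sc (\<alpha> b - \<beta> b) b) = 0" .
    have "\<alpha> b - \<beta> b = 0"
    proof (rule ccontr)
      assume nz: "\<alpha> b - \<beta> b \<noteq> 0"
      have "ksc.dependent Bs"
        unfolding ksc.dependent_finite[OF finB]
        by (rule exI[of _ "\<lambda>b. \<alpha> b - \<beta> b"]) (use nz b s0 in auto)
      then show False using ind by simp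
    qed
    then show ?thesis by (simp add: \<alpha>_def \<beta>_def)
  qed
  have Rel: "(\<Sum>b'\<in>Bs. b' (w, fr w) * c b' b q) = (\<Sum>z\<in>T. b (z, fr z) * bb z w q)"
    if b: "b \<in> Bs" and w: "w \<in> T" for b w q
  proof -
    have "(\<Sum>b'\<in>Bs. b' (w, fr w) * c b' b q) = Delta G rhd b ((w, fr w), q)"
      using rel b by (simp add: sum_fun_apply)
    also have "\<dots> = (\<Sum>z\<in>T. b (z, fr z) * bb z w q)"
      by (rule Delta_M_apply[OF _ w]) (use b BM in auto)
    finally show ?thesis .
  qed
  have cf: "c b'' b q = (\<Sum>w\<in>T. Q w b'' * (\<Sum>z\<in>T. b (z, fr z) * bb z w q))"
    if b: "b \<in> Bs" and b'': "b'' \<in> Bs" for b b'' q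
  proof -
    have "(\<Sum>w\<in>T. Q w b'' * (\<Sum>z\<in>T. b (z, fr z) * bb z w q)) =
          (\<Sum>w\<in>T. Q w b'' * (\<Sum>b'\<in>Bs. b' (w, fr w) * c b' b q))"
      by (rule sum.cong[OF refl]) (simp add: Rel b)
    also have "\<dots> = (\<Sum>w\<in>T. \<Sum>b'\<in>Bs. b' (w, fr w) * Q w b'' * c b' b q)"
      by (simp add: sum_distrib_left mult_ac)
    also have "\<dots> = (\<Sum>b'\<in>Bs. \<Sum>w\<in>T. b' (w, fr w) * Q w b'' * c b' b q)"
      by (rule sum.swap)
    also have "\<dots> = (\<Sum>b'\<in>Bs. (\<Sum>w\<in>T. b' (w, fr w) * Q w b'') * c b' b q)"
      by (simp add: sum_distrib_right)
    also have "\<dots> = (\<Sum>b'\<in>Bs. if b' = b'' then c b' b q else 0)"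
      by (rule sum.cong[OF refl]) (simp add: QP b'')
    also have "\<dots> = c b'' b q" using b'' finB by simp
    finally show ?thesis by simp
  qed
  show ?thesis
  proof
    fix q
    have "(\<Sum>b\<in>Bs. c b b) q = (\<Sum>b\<in>Bs. \<Sum>w\<in>T. Q w b * (\<Sum>z\<in>T. b (z, fr z) * bb z w q))"
      unfolding sum_fun_apply by (rule sum.cong[OF refl]) (simp add: cf)
    also have "\<dots> = (\<Sum>b\<in>Bs. \<Sum>w\<in>T. \<Sum>z\<in>T. Q w b * b (z, fr z) * bb z w q)"
      by (simp add: sum_distrib_left mult.assoc)
    also have "\<dots> = (\<Sum>w\<in>T. \<Sum>b\<in>Bs. \<Sum>z\<in>T. Q w b * b (z, fr z) * bb z w q)"
      by (rule sum.swap)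
    also have "\<dots> = (\<Sum>w\<in>T. \<Sum>z\<in>T. \<Sum>b\<in>Bs. Q w b * b (z, fr z) * bb z w q)"
      by (rule sum.cong[OF refl]) (rule sum.swap)
    also have "\<dots> = (\<Sum>w\<in>T. \<Sum>z\<in>T. (\<Sum>b\<in>Bs. Q w b * b (z, fr z)) * bb z w q)"
      by (simp add: sum_distrib_right)
    also have "\<dots> = (\<Sum>w\<in>T. \<Sum>z\<in>T. if z = w then bb w w q else 0)"
      by (intro sum.cong refl) (auto simp: PQ)
    also have "\<dots> = (\<Sum>w\<in>T. bb w w q)" using finT by simp
    also have "\<dots> = (\<Sum>z\<in>T. bb z z) q" by (simp add: sum_fun_apply)
    finally show "(\<Sum>b\<in>Bs. c b b) q = (\<Sum>z\<in>T. bb z z) q" .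
  qed
qed

theorem char_eq: "character G rhd M = (\<Sum>z\<in>T. bb z z)"
  unfolding character_def
proof (rule someI2_ex[where Q = "\<lambda>x. x = (\<Sum>z\<in>T. bb z z)"])
  obtain Bs c where w: "fin_basis Bs M" "\<forall>b\<in>Bs. Delta G rhd b = (\<Sum>b'\<in>Bs. tp b' (c b' b))"
    "(\<Sum>z\<in>T. bb z z) = (\<Sum>b\<in>Bs. c b b)"
    using char_witness by blast
  show "\<exists>x Bs c. fin_basis Bs M \<and> (\<forall>b\<in>Bs. Delta G rhd b = (\<Sum>b'\<in>Bs. tp b' (c b' b))) \<and> x = (\<Sum>b\<in>Bs. c b b)"
    by (rule exI[of _ "\<Sum>b\<in>Bs. c b b"], rule exI[of _ Bs], rule exI[of _ c]) (use w in simp)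
next
  fix x assume "\<exists>Bs c. fin_basis Bs M \<and> (\<forall>b\<in>Bs. Delta G rhd b = (\<Sum>b'\<in>Bs. tp b' (c b' b))) \<and> x = (\<Sum>b\<in>Bs. c b b)"
  then obtain Bs c where "fin_basis Bs M" "\<forall>b\<in>Bs. Delta G rhd b = (\<Sum>b'\<in>Bs. tp b' (c b' b))" "x = (\<Sum>b\<in>Bs. c b b)"
    by blast
  then show "x = (\<Sum>z\<in>T. bb z z)" using char_unique by simp
qed

lemma bb_diag: "z \<in> T \<Longrightarrow> bb z z = (\<Sum>g\<in>K. sc (a g) (pf g (rhd (inv z) f)))"
  unfolding bb_def
proof (rule sum.cong[OF refl])
  fix g assume "z \<in> T" "g \<in> K"
  then have G: "z \<in> carrier G" "g \<in> carrier G" using TG K_sub by auto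
  then have "inv z \<otimes> g \<otimes> z = g" by (simp add: m_comm[of "inv z" g] m_assoc)
  then show "sc (a g) (pf (inv z \<otimes> g \<otimes> z) (rhd (inv z) f)) = sc (a g) (pf g (rhd (inv z) f))" by simp
qed

theorem main:
  "is_cf F G rhd M (kspan {(\<Sum>g\<in>K. sc (a g) (pf (inv z' \<otimes> g \<otimes> z) (rhd (inv z) f))) | z z'. z \<in> T \<and> z' \<in> T})
   \<and> simple_subcoalgebra F G rhd (kspan {(\<Sum>g\<in>K. sc (a g) (pf (inv z' \<otimes> g \<otimes> z) (rhd (inv z) f))) | z z'. z \<in> T \<and> z' \<in> T})
   \<and> character G rhd M = (\<Sum>z\<in>T. \<Sum>g\<in>K. sc (a g) (pf g (rhd (inv z) f)))"
proof -
  have "character G rhd M = (\<Sum>z\<in>T. \<Sum>g\<in>K. sc (a g) (pf g (rhd (inv z) f)))"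
    unfolding char_eq by (rule sum.cong[OF refl]) (rule bb_diag)
  then show ?thesis using is_cf_DD simple_DD unfolding bb_def by simp
qed

end

theorem lemma6p1:
  fixes F :: "'f monoid" and G :: "'g monoid"
    and lhd :: "'g \<Rightarrow> 'f \<Rightarrow> 'g" and rhd :: "'g \<Rightarrow> 'f \<Rightarrow> 'f"
    and f :: 'f and a :: "'g \<Rightarrow> 'k::field_char_0" and T :: "'g set"
  assumes "algebraically_closed TYPE('k)"
    and "group F" and "comm_group G" and "finite (carrier G)"
    and "matched_pair F G lhd rhd"
    and "f \<in> carrier F"
    and "onedim_comodule G (stab G rhd f) a"
    and "T \<subseteq> carrier G" and "\<one>\<^bsub>G\<^esub> \<in> T"
    and "\<forall>x\<in>carrier G. \<exists>!z. z \<in> T \<and> x \<in> stab G rhd f #>\<^bsub>G\<^esub> z"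
  shows "is_cf F G rhd (induced_comodule F G rhd f a)
           (kspan {(\<Sum>g\<in>stab G rhd f.
                       sc (a g) (pf (inv\<^bsub>G\<^esub> z' \<otimes>\<^bsub>G\<^esub> g \<otimes>\<^bsub>G\<^esub> z) (rhd (inv\<^bsub>G\<^esub> z) f)))
                  | z z'. z \<in> T \<and> z' \<in> T})
       \<and> simple_subcoalgebra F G rhd
           (kspan {(\<Sum>g\<in>stab G rhd f.
                       sc (a g) (pf (inv\<^bsub>G\<^esub> z' \<otimes>\<^bsub>G\<^esub> g \<otimes>\<^bsub>G\<^esub> z) (rhd (inv\<^bsub>G\<^esub> z) f)))
                  | z z'. z \<in> T \<and> z' \<in> T})
       \<and> character G rhd (induced_comodule F G rhd f a) =
           (\<Sum>z\<in>T. \<Sum>g\<in>stab G rhd f. sc (a g) (pf g (rhd (inv\<^bsub>G\<^esub> z) f)))"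
proof -
  interpret L: Lset G F lhd rhd f a T
    unfolding Lset_def Lset_axioms_def using assms by auto
  show ?thesis by (rule L.main)
qed

end
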